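(* Let $A\in\mathbb{R}^{n\times n}$ with $\rho(A)<1$, $C\in\mathbb{R}^{m\times n}$, and $Q\in\mathbb{R}^{n\times n}$, $R\in\mathbb{R}^{m\times m}$ symmetric positive definite, with $(A,C)$ observable and $(A,Q^{1/2})$ controllable. Let $\bar P$ be the unique stabilizing positive definite solution of $$\bar P = A\bar PA^{\intercal}+Q-(A\bar PA^{\intercal}+Q)C^{\intercal}\big(C(A\bar PA^{\intercal}+Q)C^{\intercal}+R\big)^{-1}C(A\bar PA^{\intercal}+Q),$$ and let $P^{OP}=L(A,Q)$. Let $\bar\gamma\in(0,1)$ and $\mu\in(0,1)$ (in particular $\mu<1$ and $\bar\gamma<1$). Let $(\lambda_k)_{k\ge1}$ be i.i.d. $\{0,1\}$-valued with $\mathbb{P}[\lambda_k=0]=\bar\gamma$, and $(u_k)_{k\ge1}$ i.i.d. $\{0,1\}$-valued with $\mathbb{P}[u_k=0]=\mu$, independent of $(\lambda_k)$. With a fixed symmetric positive semidefinite $P_0$, define for $k\ge1$: $P_k=\bar P$ if $(\lambda_k,u_k)=(1,1)$, and $P_k=AP_{k-1}A^{\intercal}+Q$ otherwise. Let $J(\mu)=\operatorname{tr}\lim_{k\to\infty}\mathbb{E}[P_k]$. Then $J(\mu)<\operatorname{tr}P^{OP}$.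
   Context: For a square matrix $T$ with $\rho(T)<1$ and a symmetric matrix $U$, $L(T,U)$ denotes the unique solution $V$ of $V=TVT^{\intercal}+U$, equivalently $L(T,U)=\sum_{j=0}^{\infty}T^jU(T^{\intercal})^j$; $P^{OP}$ is the open-loop (prediction-only) error covariance. $P_k$ models the error covariance of a legitimate user who receives the sensor's Kalman estimate only when the packet arrives and is not noise, and otherwise predicts with the model. *)

theory Defs
  imports "HOL-Analysis.Analysis" "HOL-Probability.Probability"
begin

primrec mpow :: "real^'n^'n \<Rightarrow> nat \<Rightarrow> real^'n^'n" where
  "mpow A 0 = mat 1"
| "mpow A (Suc k) = A ** mpow A k"

definition cmat :: "real^'n^'n \<Rightarrow> complex^'n^'n" where
  "cmat A = (\<chi> i j. complex_of_real (A $ i $ j))"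

definition eigenvalues_c :: "real^'n^'n \<Rightarrow> complex set" where
  "eigenvalues_c A = {c. \<exists>v::complex^'n. v \<noteq> 0 \<and> cmat A *v v = c *s v}"

definition spectral_radius :: "real^'n^'n \<Rightarrow> real" where
  "spectral_radius A = Max (norm ` eigenvalues_c A)"

definition pos_def :: "real^'n^'n \<Rightarrow> bool" where
  "pos_def M \<longleftrightarrow> transpose M = M \<and> (\<forall>x. x \<noteq> 0 \<longrightarrow> 0 < x \<bullet> (M *v x))"

definition pos_semidef :: "real^'n^'n \<Rightarrow> bool" where
  "pos_semidef M \<longleftrightarrow> transpose M = M \<and> (\<forall>x. 0 \<le> x \<bullet> (M *v x))"

definition msqrt :: "real^'n^'n \<Rightarrow> real^'n^'n" where
  "msqrt Q = (THE S. pos_semidef S \<and> S ** S = Q)"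

text \<open>Observability of (A,C): the observability matrix [C; CA; ...; CA^(n-1)] has full column rank.\<close>
definition observable :: "real^'n^'n \<Rightarrow> real^'n^'m \<Rightarrow> bool" where
  "observable A C \<longleftrightarrow>
     (\<forall>x::real^'n. (\<forall>i<CARD('n). C *v (mpow A i *v x) = 0) \<longrightarrow> x = 0)"

text \<open>Controllability of (A,B): [B, AB, ..., A^(n-1)B] has full row rank.\<close>
definition controllable :: "real^'n^'n \<Rightarrow> real^'k^'n \<Rightarrow> bool" where
  "controllable A B \<longleftrightarrow>
     (\<forall>x::real^'n. (\<forall>i<CARD('n). x v* (mpow A i ** B) = 0) \<longrightarrow> x = 0)"

definition Lyap :: "real^'n^'n \<Rightarrow> real^'n^'n \<Rightarrow> real^'n^'n" where
  "Lyap T U = (\<Sum>j. mpow T j ** U ** transpose (mpow T j))"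

definition riccati :: "real^'n^'n \<Rightarrow> real^'n^'m \<Rightarrow> real^'n^'n \<Rightarrow> real^'m^'m \<Rightarrow> real^'n^'n \<Rightarrow> real^'n^'n" where
  "riccati A C Q R P = (let M = A ** P ** transpose A + Q in
      M - M ** transpose C ** matrix_inv (C ** M ** transpose C + R) ** C ** M)"

definition kgain :: "real^'n^'n \<Rightarrow> real^'n^'m \<Rightarrow> real^'n^'n \<Rightarrow> real^'m^'m \<Rightarrow> real^'n^'n \<Rightarrow> real^'m^'n" where
  "kgain A C Q R P = (let M = A ** P ** transpose A + Q in
      M ** transpose C ** matrix_inv (C ** M ** transpose C + R))"

text \<open>Error covariance of the legitimate user: reset to Pbar iff (lambda_k,u_k)=(1,1)
  (True encodes 1).\<close>
primrec Pseq :: "real^'n^'n \<Rightarrow> real^'n^'n \<Rightarrow> real^'n^'n \<Rightarrow> real^'n^'n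
    \<Rightarrow> (nat \<Rightarrow> 'w \<Rightarrow> bool) \<Rightarrow> (nat \<Rightarrow> 'w \<Rightarrow> bool) \<Rightarrow> nat \<Rightarrow> 'w \<Rightarrow> real^'n^'n" where
  "Pseq A Q Pbar P0 lam u 0 \<omega> = P0"
| "Pseq A Q Pbar P0 lam u (Suc k) \<omega> =
     (if lam (Suc k) \<omega> \<and> u (Suc k) \<omega> then Pbar
      else A ** Pseq A Q Pbar P0 lam u k \<omega> ** transpose A + Q)"

end

theory Submission
  imports Defs "Jordan_Normal_Form.Spectral_Radius"
begin

hide_const (open) Matrix.mat Spectral_Radius.spectral_radius
no_notation Matrix.vec_index (infixl \<open>$\<close> 100)

definition phi :: "(nat \<Rightarrow> 'n::finite) \<Rightarrow> real^'n^'n \<Rightarrow> complex Matrix.mat" where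
  "phi g X = Matrix.mat CARD('n) CARD('n) (\<lambda>(i,j). complex_of_real (X $ g i $ g j))"

definition vphi :: "(nat \<Rightarrow> 'n::finite) \<Rightarrow> complex^'n \<Rightarrow> complex Matrix.vec" where
  "vphi g v = Matrix.vec CARD('n) (\<lambda>i. v $ g i)"

lemma phi_carrier: "phi g (X::real^'n::finite^'n) \<in> carrier_mat CARD('n) CARD('n)"
  by (simp add: phi_def)

lemma phi_index: "i < CARD('n::finite) \<Longrightarrow> j < CARD('n) \<Longrightarrow> phi g (X::real^'n^'n) $$ (i,j) = complex_of_real (X $ g i $ g j)"
  by (simp add: phi_def)

lemma bij_sum:
  assumes g: "bij_betw g {0..<CARD('n)} (UNIV::'n::finite set)"
  shows "(\<Sum>k\<in>UNIV. h k) = (\<Sum>k\<in>{0..<CARD('n)}. h (g k))"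
  using sum.reindex_bij_betw[OF g, of h] by simp

lemma phi_mult:
  assumes g: "bij_betw g {0..<CARD('n)} (UNIV::'n::finite set)"
  shows "phi g ((X::real^'n^'n) ** Y) = phi g X * phi g Y"
proof (rule eq_matI)
  fix i j assume i: "i < dim_row (phi g X * phi g Y)" and j: "j < dim_col (phi g X * phi g Y)"
  have i': "i < CARD('n)" and j': "j < CARD('n)" using i j by (auto simp: phi_def)
  have "(phi g X * phi g Y) $$ (i,j) = (\<Sum>k\<in>{0..<CARD('n)}. phi g X $$ (i,k) * phi g Y $$ (k,j))"
    using i' j' by (simp add: phi_def scalar_prod_def)
  also have "\<dots> = (\<Sum>k\<in>{0..<CARD('n)}. complex_of_real (X $ g i $ g k * Y $ g k $ g j))"
    using i' j' by (intro sum.cong) (auto simp: phi_index)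
  also have "\<dots> = complex_of_real (\<Sum>k\<in>UNIV. X $ g i $ k * Y $ k $ g j)"
    by (simp add: bij_sum[OF g])
  also have "\<dots> = phi g (X ** Y) $$ (i,j)"
    using i' j' by (simp add: phi_index matrix_matrix_mult_def)
  finally show "phi g (X ** Y) $$ (i,j) = (phi g X * phi g Y) $$ (i,j)" by simp
qed (auto simp: phi_def)

lemma phi_one:
  assumes g: "bij_betw g {0..<CARD('n)} (UNIV::'n::finite set)"
  shows "phi g (mat 1 :: real^'n^'n) = 1\<^sub>m CARD('n)"
proof (rule eq_matI)
  fix i j assume "i < dim_row (1\<^sub>m CARD('n))" "j < dim_col (1\<^sub>m CARD('n))"
  then have i: "i < CARD('n)" and j: "j < CARD('n)" by auto
  have "g i = g j \<longleftrightarrow> i = j" using g i j unfolding bij_betw_def inj_on_def by auto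
  then show "phi g (mat 1 :: real^'n^'n) $$ (i,j) = 1\<^sub>m CARD('n) $$ (i,j)"
    using i j by (simp add: phi_index Finite_Cartesian_Product.mat_def)
qed (auto simp: phi_def)

lemma mpow_Suc_right: "mpow A (Suc k) = mpow A k ** A"
  by (induction k) (auto simp: matrix_mul_assoc)

lemma phi_mpow:
  assumes g: "bij_betw g {0..<CARD('n)} (UNIV::'n::finite set)"
  shows "phi g (mpow (X::real^'n^'n) k) = (phi g X) ^\<^sub>m k"
proof (induction k)
  case 0 then show ?case using phi_one[OF g] by (simp add: phi_def)
next
  case (Suc k) then show ?case by (simp add: mpow_Suc_right phi_mult[OF g] del: mpow.simps)
qed

lemma vphi_index: "i < CARD('n::finite) \<Longrightarrow> Matrix.vec_index (vphi g (v::complex^'n)) i = v $ g i"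
  by (simp add: vphi_def)

lemma phi_mulv:
  assumes g: "bij_betw g {0..<CARD('n)} (UNIV::'n::finite set)"
  shows "phi g (X::real^'n^'n) *\<^sub>v vphi g v = vphi g (cmat X *v v)"
proof (rule eq_vecI)
  fix i assume "i < dim_vec (vphi g (cmat X *v v))"
  then have i: "i < CARD('n)" by (simp add: vphi_def)
  have "Matrix.vec_index (phi g X *\<^sub>v vphi g v) i = (\<Sum>k\<in>{0..<CARD('n)}. phi g X $$ (i,k) * Matrix.vec_index (vphi g v) k)"
    using i by (simp add: phi_def vphi_def scalar_prod_def)
  also have "\<dots> = (\<Sum>k\<in>{0..<CARD('n)}. complex_of_real (X $ g i $ g k) * v $ g k)"
    using i by (intro sum.cong) (auto simp: phi_index vphi_index)
  also have "\<dots> = (\<Sum>k\<in>UNIV. complex_of_real (X $ g i $ k) * v $ k)"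
    by (simp add: bij_sum[OF g])
  also have "\<dots> = Matrix.vec_index (vphi g (cmat X *v v)) i"
    using i by (simp add: vphi_index matrix_vector_mult_def cmat_def)
  finally show "Matrix.vec_index (phi g X *\<^sub>v vphi g v) i = Matrix.vec_index (vphi g (cmat X *v v)) i" .
qed (auto simp: phi_def vphi_def)

lemma vphi_inj:
  assumes g: "bij_betw g {0..<CARD('n)} (UNIV::'n::finite set)"
  shows "vphi g (v::complex^'n) = vphi g w \<longleftrightarrow> v = w"
proof
  assume h: "vphi g v = vphi g w"
  show "v = w"
  unfolding Finite_Cartesian_Product.vec_eq_iff proof
    fix a :: 'n
    obtain i where i: "i < CARD('n)" "a = g i" using g unfolding bij_betw_def by (metis atLeastLessThan_iff imageE UNIV_I)
    have "Matrix.vec_index (vphi g v) i = Matrix.vec_index (vphi g w) i" using h by simp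
    then show "v $ a = w $ a" using i by (simp add: vphi_index)
  qed
qed simp

lemma vphi_surj:
  assumes g: "bij_betw g {0..<CARD('n)} (UNIV::'n::finite set)"
    and w: "w \<in> carrier_vec CARD('n)"
  shows "\<exists>v::complex^'n. vphi g v = w"
proof -
  define f where "f = inv_into {0..<CARD('n)} g"
  have fg: "f a < CARD('n) \<and> g (f a) = a" for a
    using g unfolding f_def bij_betw_def by (metis atLeastLessThan_iff f_inv_into_f inv_into_into UNIV_I)
  have gf: "i < CARD('n) \<Longrightarrow> f (g i) = i" for i
    using g unfolding f_def bij_betw_def by (simp add: inv_into_f_f)
  show ?thesis
    by (rule exI[of _ "\<chi> a. Matrix.vec_index w (f a)"]) (use w gf in \<open>auto simp: vphi_def\<close>)
qed

lemma vphi_zero: "vphi g (0::complex^'n::finite) = 0\<^sub>v CARD('n)"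
  by (auto simp: vphi_def)

lemma vphi_smult: "vphi g (c *s (v::complex^'n::finite)) = c \<cdot>\<^sub>v vphi g v"
  by (auto simp: vphi_def)

lemma vphi_carrier: "vphi g (v::complex^'n::finite) \<in> carrier_vec CARD('n)"
  by (auto simp: vphi_def)

lemma spectrum_phi:
  assumes g: "bij_betw g {0..<CARD('n)} (UNIV::'n::finite set)"
  shows "Spectral_Radius.spectrum (phi g (X::real^'n^'n)) = eigenvalues_c X"
proof (intro Set.set_eqI iffI)
  fix c assume "c \<in> Spectral_Radius.spectrum (phi g X)"
  then obtain w where w: "w \<in> carrier_vec CARD('n)" "w \<noteq> 0\<^sub>v CARD('n)" "phi g X *\<^sub>v w = c \<cdot>\<^sub>v w"
    unfolding Spectral_Radius.spectrum_def eigenvalue_def eigenvector_def by (auto simp: phi_def)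
  obtain v where v: "vphi g v = w" using vphi_surj[OF g w(1)] by blast
  have v0: "v \<noteq> 0" using v w(2) vphi_zero by metis
  have "vphi g (cmat X *v v) = vphi g (c *s v)"
    using w(3) v by (simp add: phi_mulv[OF g, symmetric] vphi_smult)
  then have "cmat X *v v = c *s v" by (simp add: vphi_inj[OF g])
  then show "c \<in> eigenvalues_c X" unfolding eigenvalues_c_def using v0 by blast
next
  fix c assume "c \<in> eigenvalues_c X"
  then obtain v where v: "v \<noteq> 0" "cmat X *v v = c *s v" unfolding eigenvalues_c_def by blast
  have "vphi g v \<noteq> 0\<^sub>v CARD('n)" using v(1) vphi_zero vphi_inj[OF g] by metis
  moreover have "phi g X *\<^sub>v vphi g v = c \<cdot>\<^sub>v vphi g v"
    using v(2) by (simp add: phi_mulv[OF g] vphi_smult[symmetric])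
  moreover have "dim_row (phi g X) = CARD('n)" by (simp add: phi_def)
  ultimately show "c \<in> Spectral_Radius.spectrum (phi g X)"
    unfolding Spectral_Radius.spectrum_def eigenvalue_def eigenvector_def
    using vphi_carrier by auto
qed

lemma cmat_scaleR: "cmat (c *\<^sub>R (A::real^'n::finite^'n)) *v v = complex_of_real c *s (cmat A *v v)"
  by (simp add: Finite_Cartesian_Product.vec_eq_iff cmat_def matrix_vector_mult_def sum_distrib_left mult.assoc)

lemma mpow_scaleR: "mpow (c *\<^sub>R (A::real^'n::finite^'n)) k = c ^ k *\<^sub>R mpow A k"
  by (induction k) (auto simp: scalar_matrix_assoc[symmetric] matrix_scalar_ac)

lemma mpow_decay:
  fixes A :: "real^'n::finite^'n"
  assumes rho: "spectral_radius A < 1"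
  shows "\<exists>c r. 0 < r \<and> r < 1 \<and> (\<forall>k a b. \<bar>mpow A k $ a $ b\<bar> \<le> c * r ^ k)"
proof -
  obtain g where g: "bij_betw g {0..<CARD('n)} (UNIV::'n set)"
    using ex_bij_betw_nat_finite[of "UNIV::'n set"] by auto
  have n0: "CARD('n) > 0" by simp
  define E where "E = eigenvalues_c A"
  have E: "E = Spectral_Radius.spectrum (phi g A)" using spectrum_phi[OF g] E_def by simp
  have finE: "finite E" using card_finite_spectrum(1)[OF phi_carrier] E by simp
  define \<rho> where "\<rho> = spectral_radius A"
  have rho_max: "z \<in> E \<Longrightarrow> norm z \<le> \<rho>" for z
    unfolding \<rho>_def Defs.spectral_radius_def E_def[symmetric] using finE by (intro Max_ge) auto
  define r where "r = (1 + max \<rho> 0) / 2"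
  have r: "0 < r" "r < 1" "\<rho> < r" using rho unfolding r_def \<rho>_def by auto
  define A' where "A' = (1/r) *\<^sub>R A"
  have AA': "A = r *\<^sub>R A'" using r unfolding A'_def by simp
  have E': "Spectral_Radius.spectrum (phi g A') = eigenvalues_c A'" using spectrum_phi[OF g] by simp
  have lt1: "norm z < 1" if z: "z \<in> eigenvalues_c A'" for z
  proof -
    obtain v where v: "v \<noteq> 0" "cmat A' *v v = z *s v" using z unfolding eigenvalues_c_def by blast
    have "cmat A *v v = complex_of_real r *s (z *s v)"
      using v(2) unfolding AA' by (simp add: cmat_scaleR)
    then have "complex_of_real r * z \<in> E" unfolding E_def eigenvalues_c_def using v(1)
      by (auto simp: vector_smult_assoc)
    then have "norm (complex_of_real r * z) \<le> \<rho>" by (rule rho_max)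
    then have "r * norm z \<le> \<rho>" using r by (simp add: norm_mult)
    then have "r * norm z < r * 1" using r by linarith
    then show ?thesis using r(1) mult_less_cancel_left_pos by blast
  qed
  have fin': "finite (Spectral_Radius.spectrum (phi g A'))" using card_finite_spectrum(1)[OF phi_carrier] .
  have ne': "Spectral_Radius.spectrum (phi g A') \<noteq> {}" using spectrum_non_empty[OF phi_carrier n0] .
  have "Spectral_Radius.spectral_radius (phi g A') < 1"
    unfolding Spectral_Radius.spectral_radius_def using fin' ne' lt1 E' by (subst Max_less_iff) auto
  from spectral_radius_jnf_norm_bound_less_1_upper_triangular[OF phi_carrier this]
  obtain c where c: "\<And>k. norm_bound (phi g A' ^\<^sub>m k) c" by blast
  have "\<bar>mpow A k $ a $ b\<bar> \<le> c * r ^ k" for k a b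
  proof -
    obtain i where i: "i < CARD('n)" "a = g i" using g unfolding bij_betw_def by (metis atLeastLessThan_iff imageE UNIV_I)
    obtain j where j: "j < CARD('n)" "b = g j" using g unfolding bij_betw_def by (metis atLeastLessThan_iff imageE UNIV_I)
    have "norm ((phi g A' ^\<^sub>m k) $$ (i,j)) \<le> c"
      using c[of k] i j unfolding norm_bound_def by (simp add: phi_def)
    then have "\<bar>mpow A' k $ a $ b\<bar> \<le> c"
      using i j by (simp add: phi_mpow[OF g, symmetric] phi_index)
    moreover have "mpow A k $ a $ b = r ^ k * mpow A' k $ a $ b"
      unfolding AA' mpow_scaleR by simp
    ultimately show ?thesis using r
      by (simp add: abs_mult mult.commute mult_left_mono)
  qed
  then show ?thesis using r by blast
qed



definition qf :: "real^'n^'n \<Rightarrow> real^'n \<Rightarrow> real" where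
  "qf X x = x \<bullet> (X *v x)"

definition Wm :: "real^'n^'n \<Rightarrow> nat \<Rightarrow> real^'n^'n \<Rightarrow> real^'n^'n" where
  "Wm A j Y = mpow A j ** Y ** transpose (mpow A j)"

lemma inner_mat_transpose: "(x::real^'n) \<bullet> (U *v y) = (transpose U *v x) \<bullet> y"
  by (metis dot_lmul_matrix inner_commute transpose_matrix_vector transpose_transpose)

lemma qf_congr: "qf (U ** X ** transpose U) x = qf X (transpose U *v x)"
  unfolding qf_def
  by (metis inner_mat_transpose matrix_vector_mul_assoc)

lemma qf_diff: "qf (X - Y) x = qf X x - qf Y x"
  by (simp add: qf_def matrix_vector_mult_diff_rdistrib inner_diff_right)

lemma qf_add: "qf (X + Y) x = qf X x + qf Y x"
  by (simp add: qf_def matrix_vector_mult_add_rdistrib inner_add_right)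

lemma linear_qf: "linear (\<lambda>X. qf X x)"
  by (rule linearI) (simp_all add: qf_def matrix_vector_mult_add_rdistrib inner_add_right scaleR_matrix_vector_assoc[symmetric])

lemma mv_axis: "((X::real^'n^'m) *v axis i 1) $ a = X $ a $ i"
  by (simp add: matrix_vector_mult_def axis_def if_distrib cong: if_cong)

lemma qf_axis: "qf X (axis i 1) = X $ i $ i"
  by (simp add: qf_def mv_axis inner_axis')

lemma trace_qf: "trace X = (\<Sum>i\<in>UNIV. qf X (axis i 1))"
  by (simp add: trace_def qf_axis)

lemma matrix_add_rdistrib': "((A::real^'n^'m) + B) ** C = A ** C + B ** C"
  by (simp add: matrix_matrix_mult_def Finite_Cartesian_Product.vec_eq_iff sum.distrib distrib_right)

lemma linear_congr: "linear (\<lambda>X::real^'n^'n. A ** X ** B)"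
  by (rule linearI) (simp_all add: matrix_add_ldistrib matrix_add_rdistrib' scalar_matrix_assoc matrix_scalar_ac)

lemma linear_trace: "linear (trace :: real^'n^'n \<Rightarrow> real)"
  by (rule linearI) (simp_all add: trace_add trace_def sum_distrib_left)

lemma norm_le_entries: "norm (X::real^'n^'m) \<le> (\<Sum>a\<in>UNIV. \<Sum>b\<in>UNIV. \<bar>X $ a $ b\<bar>)"
proof -
  have "norm X \<le> (\<Sum>a\<in>UNIV. norm (X $ a))"
    unfolding norm_vec_def by (rule L2_set_le_sum) simp
  also have "\<dots> \<le> (\<Sum>a\<in>UNIV. \<Sum>b\<in>UNIV. \<bar>X $ a $ b\<bar>)"
    by (intro sum_mono norm_le_l1_cart)
  finally show ?thesis .
qed

lemma entry_le_norm: "\<bar>(X::real^'n^'m) $ a $ b\<bar> \<le> norm X"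
  using component_le_norm_cart[of "X $ a" b] Finite_Cartesian_Product.norm_nth_le[of X a] by linarith

lemma entry_congr_bound:
  fixes U X V :: "real^'n^'n"
  assumes U: "\<And>a b. \<bar>U $ a $ b\<bar> \<le> e" and V: "\<And>a b. \<bar>V $ a $ b\<bar> \<le> e"
  shows "\<bar>(U ** X ** V) $ a $ b\<bar> \<le> real CARD('n) * real CARD('n) * (e * e * norm X)"
proof -
  have e0: "0 \<le> e" using U[of a a] by linarith
  have "\<bar>(U ** X ** V) $ a $ b\<bar> = \<bar>\<Sum>d\<in>UNIV. (\<Sum>c\<in>UNIV. U $ a $ c * X $ c $ d) * V $ d $ b\<bar>"
    by (simp add: matrix_matrix_mult_def)
  also have "\<dots> \<le> (\<Sum>d\<in>UNIV. \<Sum>c\<in>UNIV. \<bar>U $ a $ c\<bar> * \<bar>X $ c $ d\<bar> * \<bar>V $ d $ b\<bar>)"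
    by (rule order_trans[OF sum_abs]) (auto simp: abs_mult sum_distrib_right intro!: sum_mono order_trans[OF sum_abs])
  also have "\<dots> \<le> (\<Sum>d\<in>(UNIV::'n set). \<Sum>c\<in>(UNIV::'n set). e * norm X * e)"
    by (intro sum_mono mult_mono entry_le_norm U V) (auto simp: e0)
  also have "\<dots> = real CARD('n) * real CARD('n) * (e * e * norm X)"
    by (simp add: mult_ac)
  finally show ?thesis .
qed

lemma norm_Wm_bound:
  fixes A :: "real^'n^'n"
  assumes dec: "\<forall>k a b. \<bar>mpow A k $ a $ b\<bar> \<le> c * r ^ k" and r: "0 < r"
  shows "norm (Wm A j Y) \<le> (real CARD('n) ^ 4 * c * c) * (r * r) ^ j * norm Y"
proof -
  have "\<bar>Wm A j Y $ a $ b\<bar> \<le> real CARD('n) * real CARD('n) * ((c * r ^ j) * (c * r ^ j) * norm Y)" for a b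
    unfolding Wm_def by (rule entry_congr_bound) (use dec in \<open>auto simp: transpose_def\<close>)
  then have "norm (Wm A j Y) \<le> (\<Sum>a\<in>(UNIV::'n set). \<Sum>b\<in>(UNIV::'n set). real CARD('n) * real CARD('n) * ((c * r ^ j) * (c * r ^ j) * norm Y))"
    by (intro order_trans[OF norm_le_entries] sum_mono)
  also have "\<dots> = (real CARD('n) ^ 4 * c * c) * (r * r) ^ j * norm Y"
    by (simp add: power_mult_distrib power4_eq_xxxx mult_ac)
  finally show ?thesis .
qed



lemma affine_comb:
  fixes \<phi> :: "real^'n^'n \<Rightarrow> real^'n^'n"
  assumes lin: "linear \<phi>" and fin: "finite I" and sum1: "sum c I + d = 1"
  shows "\<phi> ((\<Sum>i\<in>I. c i *\<^sub>R X i) + d *\<^sub>R Y) + Q = (\<Sum>i\<in>I. c i *\<^sub>R (\<phi> (X i) + Q)) + d *\<^sub>R (\<phi> Y + Q)"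
proof -
  have "Q = (sum c I + d) *\<^sub>R Q" using sum1 by simp
  also have "\<dots> = (\<Sum>i\<in>I. c i *\<^sub>R Q) + d *\<^sub>R Q" by (simp add: scaleR_add_left scaleR_sum_left)
  finally have Q: "Q = (\<Sum>i\<in>I. c i *\<^sub>R Q) + d *\<^sub>R Q" .
  have "\<phi> ((\<Sum>i\<in>I. c i *\<^sub>R X i) + d *\<^sub>R Y) = (\<Sum>i\<in>I. c i *\<^sub>R \<phi> (X i)) + d *\<^sub>R \<phi> Y"
    using lin by (simp add: linear_add linear_sum linear_scale)
  then show ?thesis
    by (subst Q) (simp add: scaleR_add_right sum.distrib algebra_simps)
qed

context prob_space begin

lemma bool_rv_compl:
  assumes "f \<in> measurable M (count_space UNIV)"
  shows "prob (f -` {True} \<inter> space M) = 1 - prob (f -` {False} \<inter> space M)"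
proof -
  have e: "f -` {False} \<inter> space M \<in> events" using measurable_sets[OF assms] by simp
  have "f -` {True} \<inter> space M = space M - (f -` {False} \<inter> space M)" by auto
  then show ?thesis using prob_compl[OF e] by simp
qed

lemma indep_b:
  fixes lam u :: "nat \<Rightarrow> 'a \<Rightarrow> bool"
  assumes indep: "indep_vars (\<lambda>_. count_space UNIV)
                  (\<lambda>i \<omega>. case i of Inl k \<Rightarrow> lam k \<omega> | Inr k \<Rightarrow> u k \<omega>)
                  (Inl ` {1..} \<union> Inr ` {1..})"
  shows "indep_vars (\<lambda>_. count_space UNIV) (\<lambda>i \<omega>. lam i \<omega> \<and> u i \<omega>) {1..}"
proof -
  define X where "X = (\<lambda>i \<omega>. case i of Inl k \<Rightarrow> lam k \<omega> | Inr k \<Rightarrow> u k \<omega>)"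
  define K where "K = (\<lambda>j::nat. {Inl j, Inr j :: nat + nat})"
  have ind2: "indep_vars (\<lambda>j. PiM (K j) (\<lambda>_. count_space UNIV)) (\<lambda>j \<omega>. restrict (\<lambda>i. X i \<omega>) (K j)) {1..}"
    using indep unfolding X_def[symmetric]
    by (rule indep_vars_restrict) (auto simp: K_def disjoint_family_on_def)
  have meas: "(\<lambda>h. h (Inl j) \<and> h (Inr j)) \<in> measurable (PiM (K j) (\<lambda>_. count_space UNIV)) (count_space UNIV)" for j
    unfolding K_def by measurable
  have "indep_vars (\<lambda>_. count_space UNIV) (\<lambda>j \<omega>. (\<lambda>h. h (Inl j) \<and> h (Inr j)) (restrict (\<lambda>i. X i \<omega>) (K j))) {1..}"
    by (rule indep_vars_compose2[OF ind2 meas])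
  then show ?thesis
    by (rule indep_vars_cong[THEN iffD1, rotated -1]) (auto simp: K_def X_def)
qed

lemma exp_formula:
  fixes lam u :: "nat \<Rightarrow> 'a \<Rightarrow> bool" and A Q Pbar P0 :: "real^'n^'n"
  assumes indep: "indep_vars (\<lambda>_. count_space UNIV)
                  (\<lambda>i \<omega>. case i of Inl k \<Rightarrow> lam k \<omega> | Inr k \<Rightarrow> u k \<omega>)
                  (Inl ` {1..} \<union> Inr ` {1..})"
    and lam_dist: "\<And>k. k \<ge> 1 \<Longrightarrow> measure M {\<omega> \<in> space M. \<not> lam k \<omega>} = gbar"
    and u_dist: "\<And>k. k \<ge> 1 \<Longrightarrow> measure M {\<omega> \<in> space M. \<not> u k \<omega>} = mu"
    and p_def: "p = (1 - gbar) * (1 - mu)"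
    and g_def: "g = (\<lambda>Y. A ** Y ** transpose A + Q)"
  shows "expectation (\<lambda>\<omega>. Pseq A Q Pbar P0 lam u k \<omega>) =
           (\<Sum>j<k. (p * (1 - p) ^ j) *\<^sub>R (g ^^ j) Pbar) + ((1 - p) ^ k) *\<^sub>R (g ^^ k) P0"
proof -
  define X where "X = (\<lambda>i \<omega>. case i of Inl k \<Rightarrow> lam k \<omega> | Inr k \<Rightarrow> u k \<omega>)"
  define b where "b = (\<lambda>i \<omega>. lam i \<omega> \<and> u i \<omega>)"
  have indb: "indep_vars (\<lambda>_. count_space UNIV) b {1..}"
    unfolding b_def by (rule indep_b[OF indep])
  have rvX: "X i \<in> measurable M (count_space UNIV)" if "i \<in> Inl ` {1..} \<union> Inr ` {1..}" for i
    using indep that unfolding indep_vars_def X_def by auto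
  have rvb: "b i \<in> measurable M (count_space UNIV)" if "i \<ge> 1" for i
    using indb that unfolding indep_vars_def by auto
  have evb: "b i -` S \<inter> space M \<in> events" if "i \<ge> 1" for i S
    using measurable_sets[OF rvb[OF that]] by simp
  have plam: "prob (X (Inl i) -` {True} \<inter> space M) = 1 - gbar" if "i \<ge> 1" for i
  proof -
    have "X (Inl i) -` {False} \<inter> space M = {\<omega> \<in> space M. \<not> lam i \<omega>}" by (auto simp: X_def)
    then show ?thesis using bool_rv_compl[OF rvX[of "Inl i"]] lam_dist[OF that] that by auto
  qed
  have pu: "prob (X (Inr i) -` {True} \<inter> space M) = 1 - mu" if "i \<ge> 1" for i
  proof -
    have "X (Inr i) -` {False} \<inter> space M = {\<omega> \<in> space M. \<not> u i \<omega>}" by (auto simp: X_def)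
    then show ?thesis using bool_rv_compl[OF rvX[of "Inr i"]] u_dist[OF that] that by auto
  qed
  have pT: "prob (b i -` {True} \<inter> space M) = p" if i: "i \<ge> 1" for i
  proof -
    have "prob (\<Inter>j\<in>{Inl i, Inr i}. X j -` {True} \<inter> space M) = (\<Prod>j\<in>{Inl i, Inr i}. prob (X j -` {True} \<inter> space M))"
      using indep unfolding X_def[symmetric] by (rule indep_varsD) (use i in auto)
    moreover have "(\<Inter>j\<in>{Inl i, Inr i}. X j -` {True} \<inter> space M) = b i -` {True} \<inter> space M"
      by (auto simp: X_def b_def)
    ultimately show ?thesis using plam[OF i] pu[OF i] by (simp add: p_def)
  qed
  have pF: "prob (b i -` {False} \<inter> space M) = 1 - p" if i: "i \<ge> 1" for i
    using bool_rv_compl[OF rvb[OF i]] pT[OF i] by simp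
  define Ev where "Ev = (\<lambda>k j. \<Inter>i\<in>{k-j..k}. b i -` (if i = k - j then {True} else {False}) \<inter> space M)"
  define Nv where "Nv = (\<lambda>k. if k = 0 then space M else \<Inter>i\<in>{1..k}. b i -` {False} \<inter> space M)"
  have memEv: "\<omega> \<in> Ev k j \<longleftrightarrow> (\<forall>i\<in>{k-j..k}. b i \<omega> = (i = k - j))" if "\<omega> \<in> space M" for \<omega> k j
    using that unfolding Ev_def by auto
  have memNv: "\<omega> \<in> Nv k \<longleftrightarrow> (\<forall>i\<in>{1..k}. \<not> b i \<omega>)" if "\<omega> \<in> space M" for \<omega> k
    using that unfolding Nv_def by auto
  have Ev_sub: "Ev k j \<subseteq> space M" for k j unfolding Ev_def by auto
  have Nv_sub: "Nv k \<subseteq> space M" for k unfolding Nv_def by auto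
  have Ev_ev: "Ev k j \<in> events" if "j < k" for k j
    unfolding Ev_def using that by (intro sets.finite_INT) (auto intro!: evb)
  have Nv_ev: "Nv k \<in> events" for k
  proof (cases "k = 0")
    case False
    then show ?thesis unfolding Nv_def by (simp only: if_False) (rule sets.finite_INT, auto intro!: evb)
  qed (simp add: Nv_def)
  have pEv: "prob (Ev k j) = p * (1 - p) ^ j" if jk: "j < k" for k j
  proof -
    have "prob (Ev k j) = (\<Prod>i\<in>{k-j..k}. prob (b i -` (if i = k - j then {True} else {False}) \<inter> space M))"
      unfolding Ev_def by (rule indep_varsD[OF indb]) (use jk in auto)
    also have "\<dots> = (\<Prod>i\<in>{k-j..k}. if i = k - j then p else 1 - p)"
      using jk by (intro prod.cong refl) (auto simp: pT pF)
    also have "{k-j..k} = insert (k-j) {Suc (k-j)..k}" using jk by auto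
    also have "(\<Prod>i\<in>insert (k-j) {Suc (k-j)..k}. if i = k - j then p else 1 - p) = p * (1 - p) ^ j"
      using jk by (simp add: prod.insert)
    finally show ?thesis .
  qed
  have pNv: "prob (Nv k) = (1 - p) ^ k" for k
  proof (cases "k = 0")
    case True then show ?thesis by (simp add: Nv_def prob_space)
  next
    case False
    have "prob (Nv k) = (\<Prod>i\<in>{1..k}. prob (b i -` {False} \<inter> space M))"
      unfolding Nv_def using False by (simp only: if_False) (rule indep_varsD[OF indb], auto)
    also have "\<dots> = (\<Prod>i\<in>{1..k}. 1 - p)" by (intro prod.cong refl) (auto simp: pF)
    finally show ?thesis by simp
  qed
  have pw: "Pseq A Q Pbar P0 lam u k \<omega> = (\<Sum>j<k. indicator (Ev k j) \<omega> *\<^sub>R (g ^^ j) Pbar) + indicator (Nv k) \<omega> *\<^sub>R (g ^^ k) P0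
     \<and> (\<Sum>j<k. indicator (Ev k j) \<omega>) + indicator (Nv k) \<omega> = (1::real)" if om: "\<omega> \<in> space M" for k \<omega>
  proof (induction k)
    case 0
    then show ?case using om by (simp add: Nv_def)
  next
    case (Suc k)
    show ?case
    proof (cases "b (Suc k) \<omega>")
      case True
      have e0: "\<omega> \<in> Ev (Suc k) 0" using True om by (simp add: memEv)
      have eS: "\<omega> \<notin> Ev (Suc k) (Suc j)" if "j < k" for j
        using True om that by (subst memEv) (auto intro!: bexI[of _ "Suc k"])
      have nS: "\<omega> \<notin> Nv (Suc k)" using True om by (subst memNv) auto
      have P: "Pseq A Q Pbar P0 lam u (Suc k) \<omega> = Pbar" using True by (simp add: b_def)
      show ?thesis
        by (simp only: sum.lessThan_Suc_shift P) (simp add: e0 eS nS)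
    next
      case False
      have e0: "\<omega> \<notin> Ev (Suc k) 0" using False om by (simp add: memEv)
      have eS: "\<omega> \<in> Ev (Suc k) (Suc j) \<longleftrightarrow> \<omega> \<in> Ev k j" if "j < k" for j
      proof -
        have "{k - j..Suc k} = insert (Suc k) {k-j..k}" using that by auto
        moreover have "Suc k \<noteq> k - j" by simp
        ultimately show ?thesis using False om that by (simp add: memEv)
      qed
      have nS: "\<omega> \<in> Nv (Suc k) \<longleftrightarrow> \<omega> \<in> Nv k"
      proof -
        have "{1..Suc k} = insert (Suc k) {1..k}" by auto
        then show ?thesis using False om by (simp add: memNv)
      qed
      have P: "Pseq A Q Pbar P0 lam u (Suc k) \<omega> = A ** Pseq A Q Pbar P0 lam u k \<omega> ** transpose A + Q"
        using False by (auto simp: b_def)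
      have sum1: "(\<Sum>j<k. indicator (Ev k j) \<omega>) + indicator (Nv k) \<omega> = (1::real)" using Suc by blast
      have "Pseq A Q Pbar P0 lam u (Suc k) \<omega> = (\<Sum>j<k. indicator (Ev k j) \<omega> *\<^sub>R (A ** (g ^^ j) Pbar ** transpose A + Q)) + indicator (Nv k) \<omega> *\<^sub>R (A ** (g ^^ k) P0 ** transpose A + Q)"
        unfolding P using Suc[THEN conjunct1] affine_comb[OF linear_congr _ sum1] by simp
      also have "\<dots> = (\<Sum>j<Suc k. indicator (Ev (Suc k) j) \<omega> *\<^sub>R (g ^^ j) Pbar) + indicator (Nv (Suc k)) \<omega> *\<^sub>R (g ^^ Suc k) P0"
        by (simp only: sum.lessThan_Suc_shift) (simp add: e0 eS nS indicator_def g_def cong: sum.cong_simp)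
      finally have 1: "Pseq A Q Pbar P0 lam u (Suc k) \<omega> = \<dots>" .
      have eq2: "(\<Sum>j<Suc k. indicator (Ev (Suc k) j) \<omega>) + indicator (Nv (Suc k)) \<omega> = (\<Sum>j<k. indicator (Ev k j) \<omega>) + (indicator (Nv k) \<omega> :: real)"
        by (simp only: sum.lessThan_Suc_shift) (simp add: e0 eS nS indicator_def cong: sum.cong_simp)
      show ?thesis using 1 eq2 sum1 by argo
    qed
  qed
  have intI: "integrable M (indicator S :: 'a \<Rightarrow> real)" if "S \<in> events" for S
    using that by (simp add: integrable_indicator_iff less_top[symmetric])
  have "expectation (\<lambda>\<omega>. Pseq A Q Pbar P0 lam u k \<omega>) =
        expectation (\<lambda>\<omega>. (\<Sum>j<k. indicator (Ev k j) \<omega> *\<^sub>R (g ^^ j) Pbar) + indicator (Nv k) \<omega> *\<^sub>R (g ^^ k) P0)"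
    using pw by (intro Bochner_Integration.integral_cong) auto
  also have "\<dots> = (\<Sum>j<k. prob (Ev k j) *\<^sub>R (g ^^ j) Pbar) + prob (Nv k) *\<^sub>R (g ^^ k) P0"
  proof -
    have i1: "integrable M (\<lambda>\<omega>. \<Sum>j<k. indicator (Ev k j) \<omega> *\<^sub>R (g ^^ j) Pbar)"
      by (intro Bochner_Integration.integrable_sum integrable_scaleR_left intI Ev_ev) auto
    have i2: "integrable M (\<lambda>\<omega>. indicator (Nv k) \<omega> *\<^sub>R (g ^^ k) P0)"
      by (intro integrable_scaleR_left intI Nv_ev)
    show ?thesis
      unfolding Bochner_Integration.integral_add[OF i1 i2]
      using Ev_ev Ev_sub Nv_sub Nv_ev[of k]
      by (subst Bochner_Integration.integral_sum) (auto simp: intI Int_absorb2 Bochner_Integration.integral_scaleR_left)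
  qed
  also have "\<dots> = (\<Sum>j<k. (p * (1 - p) ^ j) *\<^sub>R (g ^^ j) Pbar) + ((1 - p) ^ k) *\<^sub>R (g ^^ k) P0"
    by (simp add: pEv pNv)
  finally show ?thesis .
qed

end


lemma transpose_add': "transpose ((X::real^'n^'m) + Y) = transpose X + transpose Y"
  by (simp add: transpose_def Finite_Cartesian_Product.vec_eq_iff)

lemma qf_zero_vec[simp]: "qf X 0 = 0"
  by (simp add: qf_def)

lemma pd_nonneg: "pos_def X \<Longrightarrow> 0 \<le> qf X x"
  unfolding pos_def_def qf_def by (cases "x = 0") (auto intro: less_imp_le)

lemma pd_pos: "pos_def X \<Longrightarrow> x \<noteq> 0 \<Longrightarrow> 0 < qf X x"
  unfolding pos_def_def qf_def by auto

lemma pd_ker: assumes "\<And>x. x \<noteq> 0 \<Longrightarrow> 0 < qf (X::real^'n^'n) x" shows "\<exists>B. X ** B = mat 1"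
proof -
  have "\<forall>x. X *v x = 0 \<longrightarrow> x = 0"
    using assms unfolding qf_def by (metis inner_zero_right less_irrefl)
  then obtain B where "B ** X = mat 1" using matrix_left_invertible_ker by blast
  then show ?thesis using matrix_left_right_inverse by blast
qed

lemma matrix_inv_works: assumes "X ** B = mat 1" shows "X ** matrix_inv (X::real^'n^'n) = mat 1 \<and> matrix_inv X ** X = mat 1"
proof -
  have "\<exists>B. X ** B = mat 1 \<and> B ** X = mat 1" using assms matrix_left_right_inverse by blast
  then show ?thesis unfolding matrix_inv_def by (rule someI_ex)
qed

theorem lemma5:
  fixes A Q Pbar P0 :: "real^'n^'n" and C :: "real^'n^'m" and R :: "real^'m^'m"
    and M :: "'w measure" and lam u :: "nat \<Rightarrow> 'w \<Rightarrow> bool"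
    and gbar mu :: real
  assumes rhoA: "spectral_radius A < 1"
    and QPD: "pos_def Q" and RPD: "pos_def R"
    and obs: "observable A C" and ctrl: "controllable A (msqrt Q)"
    and Pbar_pd: "pos_def Pbar"
    and Pbar_ric: "Pbar = riccati A C Q R Pbar"
    and Pbar_stab: "spectral_radius ((mat 1 - kgain A C Q R Pbar ** C) ** A) < 1"
    and gbar: "0 < gbar" "gbar < 1" and mu: "0 < mu" "mu < 1"
    and P0: "pos_semidef P0"
    and M: "prob_space M"
    and indep: "prob_space.indep_vars M (\<lambda>_. count_space UNIV)
                  (\<lambda>i \<omega>. case i of Inl k \<Rightarrow> lam k \<omega> | Inr k \<Rightarrow> u k \<omega>)
                  (Inl ` {1..} \<union> Inr ` {1..})"
    and lam_dist: "\<And>k. k \<ge> 1 \<Longrightarrow> measure M {\<omega> \<in> space M. \<not> lam k \<omega>} = gbar"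
    and u_dist: "\<And>k. k \<ge> 1 \<Longrightarrow> measure M {\<omega> \<in> space M. \<not> u k \<omega>} = mu"
  shows "convergent (\<lambda>k. prob_space.expectation M (\<lambda>\<omega>. Pseq A Q Pbar P0 lam u k \<omega>)) \<and>
         trace (lim (\<lambda>k. prob_space.expectation M (\<lambda>\<omega>. Pseq A Q Pbar P0 lam u k \<omega>)))
           < trace (Lyap A Q)"
proof -
  interpret P: prob_space M by (rule M)
  obtain c r where r: "0 < r" "r < 1" and dec: "\<forall>k a b. \<bar>mpow A k $ a $ b\<bar> \<le> c * r ^ k"
    using mpow_decay[OF rhoA] by blast
  define K0 where "K0 = real CARD('n) ^ 4 * c * c"
  have nW: "norm (Wm A j Y) \<le> K0 * (r * r) ^ j * norm Y" for j Y
    unfolding K0_def by (rule norm_Wm_bound[OF dec r(1)])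
  have "r * r < r * 1" using mult_strict_left_mono[OF r(2) r(1)] .
  then have "r * r < 1" using r(2) by linarith
  then have rr: "norm (r * r) < 1" using r by simp
  have c0: "0 \<le> c" using dec[rule_format, of 0 undefined undefined] by simp
  have K0: "0 \<le> K0" unfolding K0_def using c0 by simp
  have sumW: "summable (\<lambda>j. Wm A j Y)" for Y
  proof (rule summable_comparison_test')
    show "summable (\<lambda>j. K0 * norm Y * (r * r) ^ j)"
      by (intro summable_mult summable_geometric rr)
    show "norm (Wm A j Y) \<le> K0 * norm Y * (r * r) ^ j" for j
      using nW[of j Y] by (simp add: mult_ac)
  qed
  have Wlim: "(\<lambda>j. Wm A j Y) \<longlonglongrightarrow> 0" for Y
  proof (rule Lim_null_comparison)
    show "\<forall>\<^sub>F j in sequentially. norm (Wm A j Y) \<le> K0 * norm Y * (r * r) ^ j"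
      using nW by (simp add: mult_ac)
    show "(\<lambda>j. K0 * norm Y * (r * r) ^ j) \<longlonglongrightarrow> 0"
      by (intro tendsto_mult_right_zero LIMSEQ_power_zero rr)
  qed
  have W0: "Wm A 0 Y = Y" for Y by (simp add: Wm_def)
  have WS: "Wm A (Suc j) Y = A ** Wm A j Y ** transpose A" for j Y
    by (simp add: Wm_def matrix_transpose_mul matrix_mul_assoc)
  have bl_congr: "bounded_linear (\<lambda>X::real^'n^'n. A ** X ** transpose A)"
    by (rule linear_conv_bounded_linear[THEN iffD1, OF linear_congr])
  define L where "L = Lyap A Q"
  have L_eq: "L = (\<Sum>j. Wm A j Q)" by (simp add: L_def Lyap_def Wm_def)
  have Lfix: "L = A ** L ** transpose A + Q"
  proof -
    have "(\<Sum>j. Wm A (Suc j) Q) = L - Q"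
      using suminf_split_head[OF sumW[of Q]] by (simp add: L_eq W0)
    moreover have "(\<Sum>j. Wm A (Suc j) Q) = A ** L ** transpose A"
      unfolding WS L_eq by (rule bounded_linear.suminf[OF bl_congr sumW, symmetric])
    ultimately show ?thesis by (metis diff_add_cancel)
  qed
  define g where "g = (\<lambda>Y. A ** Y ** transpose A + Q)"
  have Gclosed: "(g ^^ j) X = L + Wm A j (X - L)" for j X
  proof (induction j)
    case 0 then show ?case by (simp add: W0)
  next
    case (Suc j)
    have "(g ^^ Suc j) X = A ** (L + Wm A j (X - L)) ** transpose A + Q"
      by (simp only: funpow.simps comp_apply Suc) (simp add: g_def)
    also have "\<dots> = (A ** L ** transpose A + Q) + A ** Wm A j (X - L) ** transpose A"
      by (simp add: matrix_add_ldistrib matrix_add_rdistrib' algebra_simps)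
    also have "\<dots> = L + Wm A (Suc j) (X - L)" by (simp add: WS Lfix[symmetric])
    finally show ?case .
  qed
  have symQ: "transpose Q = Q" using QPD by (simp add: pos_def_def)
  have symR: "transpose R = R" using RPD by (simp add: pos_def_def)
  have symP: "transpose Pbar = Pbar" using Pbar_pd by (simp add: pos_def_def)
  define Mm where "Mm = A ** Pbar ** transpose A + Q"
  define S where "S = C ** Mm ** transpose C + R"
  define N where "N = matrix_inv S"
  define K where "K = Mm ** transpose C ** N ** C ** Mm"
  have Pbar_eq: "Pbar = Mm - K"
    using Pbar_ric unfolding riccati_def Let_def Mm_def[symmetric] S_def[symmetric] N_def[symmetric] K_def by simp
  have symM: "transpose Mm = Mm"
    by (simp add: Mm_def transpose_add' matrix_transpose_mul symQ symP matrix_mul_assoc)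
  have Mm_pd: "0 < qf Mm x" if "x \<noteq> 0" for x
  proof -
    have "qf Mm x = qf Pbar (transpose A *v x) + qf Q x" by (simp add: Mm_def qf_add qf_congr)
    then show ?thesis using pd_nonneg[OF Pbar_pd] pd_pos[OF QPD that] by (smt (verit))
  qed
  have S_pd: "0 < qf S y" if "y \<noteq> 0" for y
  proof -
    have "qf S y = qf Mm (transpose C *v y) + qf R y" by (simp add: S_def qf_add qf_congr)
    moreover have "0 \<le> qf Mm (transpose C *v y)" using Mm_pd by (cases "transpose C *v y = 0") (auto intro: less_imp_le)
    ultimately show ?thesis using pd_pos[OF RPD that] by (smt (verit))
  qed
  have symS: "transpose S = S"
    by (simp add: S_def transpose_add' matrix_transpose_mul symR symM matrix_mul_assoc)
  have SN: "S ** N = mat 1" "N ** S = mat 1"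
    using matrix_inv_works[of S] pd_ker[OF S_pd] unfolding N_def by blast+
  have N_pd: "0 < qf N y" if "y \<noteq> 0" for y
  proof -
    define z where "z = N *v y"
    have y: "S *v z = y" unfolding z_def by (simp add: matrix_vector_mul_assoc SN)
    then have "z \<noteq> 0" using that by auto
    have "qf N y = y \<bullet> z" by (simp add: qf_def z_def)
    also have "\<dots> = qf S z" unfolding y[symmetric] qf_def
      by (metis inner_commute inner_mat_transpose symS)
    finally show ?thesis using S_pd[OF \<open>z \<noteq> 0\<close>] by simp
  qed
  have N_psd: "0 \<le> qf N y" for y using N_pd by (cases "y = 0") (auto intro: less_imp_le)
  define U where "U = Mm ** transpose C"
  have UT: "transpose U = C ** Mm" by (simp add: U_def matrix_transpose_mul symM)
  have K_eq: "K = U ** N ** transpose U" by (simp only: K_def UT) (simp add: U_def matrix_mul_assoc)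
  have qK: "qf K x = qf N ((C ** Mm) *v x)" for x unfolding K_eq by (subst qf_congr) (simp only: UT)
  have qK_nonneg: "0 \<le> qf K x" for x by (simp add: qK N_psd)
  define D where "D = Pbar - L"
  have D_rec: "D = A ** D ** transpose A - K"
  proof -
    have h1: "Pbar = A ** Pbar ** transpose A + Q - K" using Pbar_eq by (simp add: Mm_def)
    have "D = (A ** Pbar ** transpose A + Q - K) - (A ** L ** transpose A + Q)"
      unfolding D_def by (rule arg_cong2[where f = "(-)", OF h1 Lfix])
    also have "\<dots> = (A ** Pbar ** transpose A - A ** L ** transpose A) - K"
      by (simp add: algebra_simps)
    also have "A ** Pbar ** transpose A - A ** L ** transpose A = A ** D ** transpose A"
      unfolding D_def by (rule linear_diff[OF linear_congr, symmetric])
    finally show ?thesis .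
  qed
  have qD_step: "qf D x = qf D (transpose A *v x) - qf K x" for x
    by (subst D_rec) (simp add: qf_diff qf_congr)
  have qD_iter: "qf D x \<le> qf (Wm A j D) x" for j x
  proof (induction j)
    case 0 then show ?case by (simp add: W0)
  next
    case (Suc j)
    have "qf (Wm A j D) x = qf D (transpose (mpow A j) *v x)" by (simp add: Wm_def qf_congr)
    also have "\<dots> \<le> qf D (transpose A *v (transpose (mpow A j) *v x))"
      using qD_step[of "transpose (mpow A j) *v x"] qK_nonneg[of "transpose (mpow A j) *v x"] by linarith
    also have "\<dots> = qf (Wm A (Suc j) D) x"
    proof -
      have tr: "transpose (mpow A (Suc j)) = transpose A ** transpose (mpow A j)"
        by (simp only: mpow_Suc_right matrix_transpose_mul)
      have "qf (Wm A (Suc j) D) x = qf D (transpose (mpow A (Suc j)) *v x)"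
        unfolding Wm_def by (rule qf_congr)
      then show ?thesis by (simp only: tr matrix_vector_mul_assoc)
    qed
    finally show ?case using Suc by linarith
  qed
  have qD_nonpos: "qf D x \<le> 0" for x
  proof -
    have "(\<lambda>j. qf (Wm A j D) x) \<longlonglongrightarrow> qf 0 x"
      by (rule bounded_linear.tendsto[OF linear_conv_bounded_linear[THEN iffD1, OF linear_qf] Wlim])
    then have "(\<lambda>j. qf (Wm A j D) x) \<longlonglongrightarrow> 0" by (simp add: qf_def)
    then show ?thesis by (rule LIMSEQ_le_const) (use qD_iter in auto)
  qed
  have qD_K: "qf D x \<le> - qf K x" for x
    using qD_step[of x] qD_nonpos[of "transpose A *v x"] by linarith
  have trD_K: "trace D \<le> - trace K"
    unfolding trace_qf by (simp add: sum_negf[symmetric] sum_mono qD_K)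
  have trK_pos: "0 < trace K"
  proof (rule ccontr)
    assume "\<not> 0 < trace K"
    then have "trace K \<le> 0" by simp
    then have "(\<Sum>i\<in>UNIV. qf K (axis i 1)) = 0"
      unfolding trace_qf using qK_nonneg by (smt (verit) sum_nonneg)
    then have "\<forall>i\<in>UNIV. qf K (axis i 1) = 0"
      using sum_nonneg_eq_0_iff[of UNIV "\<lambda>i. qf K (axis i 1)"] qK_nonneg by auto
    then have h: "(C ** Mm) *v axis i 1 = 0" for i
      using N_pd unfolding qK by (metis UNIV_I less_irrefl)
    have "(C ** Mm) $ a $ i = 0" for a i using mv_axis[of "C ** Mm" i a] h[of i] by simp
    then have CM0: "C ** Mm = 0"
      by (simp add: Finite_Cartesian_Product.vec_eq_iff)
    obtain B where B: "Mm ** B = mat 1" using pd_ker[OF Mm_pd] by blast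
    have "C = (C ** Mm) ** B" by (simp add: matrix_mul_assoc[symmetric] B)
    then have C0: "C = 0" using CM0 by simp
    define x :: "real^'n" where "x = axis undefined 1"
    have "x \<noteq> 0" by (simp add: x_def axis_eq_0_iff)
    moreover have "x = 0" using obs unfolding observable_def C0 by simp
    ultimately show False by simp
  qed
  have trD_neg: "trace D < 0" using trD_K trK_pos by linarith
  have trW_nonpos: "trace (Wm A j D) \<le> 0" for j
    unfolding trace_qf by (intro sum_nonpos) (simp add: Wm_def qf_congr qD_nonpos)
  define p where "p = (1 - gbar) * (1 - mu)"
  have "(1 - gbar) * (1 - mu) < (1 - gbar)"
    using mult_strict_left_mono[of "1-mu" 1 "1-gbar"] gbar mu by simp
  then have p1: "p < 1" using gbar unfolding p_def by linarith
  have p0: "0 < p" using gbar mu unfolding p_def by (intro mult_pos_pos) auto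
  note p = p0 p1
  define E where "E = (\<lambda>k. P.expectation (\<lambda>\<omega>. Pseq A Q Pbar P0 lam u k \<omega>))"
  have E: "E k = (\<Sum>j<k. (p * (1 - p) ^ j) *\<^sub>R (g ^^ j) Pbar) + ((1 - p) ^ k) *\<^sub>R (g ^^ k) P0" for k
    unfolding E_def by (rule P.exp_formula[OF indep lam_dist u_dist p_def g_def])
  define s where "s = (\<lambda>j. p * (1 - p) ^ j)"
  have s_sums: "s sums 1"
  proof -
    have "(\<lambda>n. (1 - p) ^ n) sums (1 / (1 - (1 - p)))" by (rule geometric_sums) (use p in simp)
    from sums_mult[OF this, of p] show ?thesis using p by (simp add: s_def)
  qed
  have s_le: "0 \<le> s j" "s j \<le> p" for j
    using p by (auto simp: s_def power_le_one mult_left_le)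
  have sumS: "summable (\<lambda>j. s j *\<^sub>R Wm A j D)"
  proof (rule summable_comparison_test')
    show "summable (\<lambda>j. p * K0 * norm D * (r * r) ^ j)"
      by (intro summable_mult summable_geometric rr)
    show "norm (s j *\<^sub>R Wm A j D) \<le> p * K0 * norm D * (r * r) ^ j" for j
    proof -
      have "norm (s j *\<^sub>R Wm A j D) = s j * norm (Wm A j D)" using s_le by simp
      also have "\<dots> \<le> p * (K0 * (r * r) ^ j * norm D)"
        using s_le nW[of j D] p by (intro mult_mono) auto
      finally show ?thesis by (simp add: mult_ac)
    qed
  qed
  define Sm where "Sm = (\<Sum>j. s j *\<^sub>R Wm A j D)"
  have E2: "E k = (\<Sum>j<k. s j) *\<^sub>R L + (\<Sum>j<k. s j *\<^sub>R Wm A j D) + ((1 - p) ^ k *\<^sub>R L + (1 - p) ^ k *\<^sub>R Wm A k (P0 - L))" for k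
    unfolding E Gclosed s_def D_def
    by (simp add: scaleR_add_right sum.distrib scaleR_sum_left)
  have lim1: "(\<lambda>k. (\<Sum>j<k. s j) *\<^sub>R L) \<longlonglongrightarrow> 1 *\<^sub>R L"
    by (intro tendsto_scaleR tendsto_const s_sums[unfolded sums_def])
  have lim2: "(\<lambda>k. \<Sum>j<k. s j *\<^sub>R Wm A j D) \<longlonglongrightarrow> Sm"
    unfolding Sm_def by (rule summable_LIMSEQ[OF sumS])
  have pw0: "(\<lambda>k. (1 - p) ^ k) \<longlonglongrightarrow> 0" by (rule LIMSEQ_power_zero) (use p in simp)
  have lim3: "(\<lambda>k. (1 - p) ^ k *\<^sub>R L + (1 - p) ^ k *\<^sub>R Wm A k (P0 - L)) \<longlonglongrightarrow> 0 *\<^sub>R L + 0 *\<^sub>R 0"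
    by (intro tendsto_add tendsto_scaleR pw0 tendsto_const Wlim)
  have limE: "E \<longlonglongrightarrow> L + Sm"
  proof -
    have "(\<lambda>k. (\<Sum>j<k. s j) *\<^sub>R L + (\<Sum>j<k. s j *\<^sub>R Wm A j D) + ((1 - p) ^ k *\<^sub>R L + (1 - p) ^ k *\<^sub>R Wm A k (P0 - L)))
       \<longlonglongrightarrow> 1 *\<^sub>R L + Sm + (0 *\<^sub>R L + 0 *\<^sub>R 0)"
      by (intro tendsto_add lim1 lim2 lim3)
    then show ?thesis unfolding E2[symmetric] by simp
  qed
  have bl_tr: "bounded_linear (trace :: real^'n^'n \<Rightarrow> real)"
    by (rule linear_conv_bounded_linear[THEN iffD1, OF linear_trace])
  have tr_scale: "trace (a *\<^sub>R X) = a * trace X" for a and X :: "real^'n^'n"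
    using linear_scale[OF linear_trace] by simp
  have trSm: "trace Sm = (\<Sum>j. s j * trace (Wm A j D))"
    unfolding Sm_def bounded_linear.suminf[OF bl_tr sumS] tr_scale ..
  have sum_tr: "summable (\<lambda>j. s j * trace (Wm A j D))"
    using bounded_linear.summable[OF bl_tr sumS] by (simp add: tr_scale)
  have "0 < (\<Sum>j. - (s j * trace (Wm A j D)))"
  proof (rule suminf_pos2[of _ 0])
    show "summable (\<lambda>j. - (s j * trace (Wm A j D)))" by (rule summable_minus[OF sum_tr])
    show "0 \<le> - (s j * trace (Wm A j D))" for j
      using s_le(1)[of j] trW_nonpos[of j] by (simp add: mult_nonneg_nonpos)
    show "0 < - (s 0 * trace (Wm A 0 D))"
      using p trD_neg by (simp add: s_def W0 mult_pos_neg)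
  qed
  then have trSm_neg: "trace Sm < 0" unfolding trSm suminf_minus[OF sum_tr] by simp
  have "convergent E" using limE by (auto simp: convergent_def)
  moreover have "lim E = L + Sm" using limE by (rule limI)
  ultimately show ?thesis
    using trSm_neg unfolding E_def[symmetric] L_def[symmetric] by (simp add: trace_add)
qed


end
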